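(* For every integer $t\ge 2$, every convex polygon whose vertices are points of $S_t$ has at most $t-1$ vertices.
   Context: For integers $r\ge 1$ let $\delta_r:=3\cdot 4^{r-1}$ and $\delta_r':=(3r+1)\cdot 4^{r-1}$. For positive integers $k,l$ define $S_{k,l}\subset\mathbb{Z}^2$ recursively: $S_{k,l}:=\{(0,0)\}$ if $k\le 2$ or $l\le 2$; otherwise $S_{k,l}:=S_{k-1,l}\cup\{(x+\delta_{k+l-1},\,y+\delta_{k+l-1}'):(x,y)\in S_{k,l-1}\}$. Let $t\ge 2$ be an integer. For $0\le i\le t-3$ define $v_i:=(3(t-i),-3i)$, and let $w_0:=(0,0)$, $w_{i+1}:=w_i+v_i$ for $i=0,\dots,t-3$. For $i=0,\dots,t-2$ let $q_i:=(t+1)4^{t+1}w_i$. Define $S_t:=\bigcup_{i=0}^{t-2}\{p+q_i: p\in S_{t-i,i+2}\}$. *)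

theory Defs
  imports "HOL-Analysis.Analysis"
begin

definition delta :: "nat \<Rightarrow> int" where
  "delta r = 3 * 4 ^ (r - 1)"

definition delta' :: "nat \<Rightarrow> int" where
  "delta' r = (3 * int r + 1) * 4 ^ (r - 1)"

function Skl :: "nat \<Rightarrow> nat \<Rightarrow> (int \<times> int) set" where
  "Skl k l = (if k \<le> 2 \<or> l \<le> 2 then {(0, 0)}
     else Skl (k - 1) l \<union>
          (\<lambda>(x, y). (x + delta (k + l - 1), y + delta' (k + l - 1))) ` Skl k (l - 1))"
  by pat_completeness auto
termination by (relation "Wellfounded.measure (\<lambda>(k, l). k + l)") auto

definition v :: "nat \<Rightarrow> nat \<Rightarrow> int \<times> int" where
  "v t i = (3 * (int t - int i), - 3 * int i)"

fun w :: "nat \<Rightarrow> nat \<Rightarrow> int \<times> int" where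
  "w t 0 = (0, 0)"
| "w t (Suc i) = (fst (w t i) + fst (v t i), snd (w t i) + snd (v t i))"

definition q :: "nat \<Rightarrow> nat \<Rightarrow> int \<times> int" where
  "q t i = (let c = (int t + 1) * 4 ^ (t + 1) in (c * fst (w t i), c * snd (w t i)))"

definition St :: "nat \<Rightarrow> (int \<times> int) set" where
  "St t = (\<Union>i\<in>{0..t - 2}. (\<lambda>p. (fst p + fst (q t i), snd p + snd (q t i))) ` Skl (t - i) (i + 2))"

definition to_real :: "int \<times> int \<Rightarrow> real \<times> real" where
  "to_real p = (real_of_int (fst p), real_of_int (snd p))"

text \<open>A finite point set is the vertex set of a convex polygon iff it is in convex
  position: no point lies in the convex hull of the others.\<close>
definition convex_position :: "(real \<times> real) set \<Rightarrow> bool" where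
  "convex_position P \<longleftrightarrow> (\<forall>p\<in>P. p \<notin> convex hull (P - {p}))"

end

theory Submission
  imports Defs
begin


declare Skl.simps[simp del]

lemma four_pow_ge: "int n + 1 \<le> 4 ^ n"
  by (induction n) auto

lemma Skl_base: "k \<le> 2 \<or> l \<le> 2 \<Longrightarrow> Skl k l = {(0,0)}"
  by (subst Skl.simps) simp

definition sh :: "nat \<Rightarrow> int \<times> int \<Rightarrow> int \<times> int" where
  "sh r p = (fst p + delta r, snd p + delta' r)"

lemma Skl_step: "\<not> (k \<le> 2 \<or> l \<le> 2) \<Longrightarrow> Skl k l = Skl (k-1) l \<union> sh (k+l-1) ` Skl k (l-1)"
  by (subst Skl.simps) (simp add: sh_def case_prod_beta')

lemma base_ineq:
  fixes lam :: int
  assumes "lam \<ge> int n + 1"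
  shows "0 \<ge> (int n - lam) * 4 ^ n + lam"
proof -
  have a: "int n + 1 \<le> 4 ^ n" by (rule four_pow_ge)
  have "(lam - int n) * 4 ^ n \<ge> (lam - int n) * (int n + 1)"
    using a assms by (intro mult_left_mono) auto
  moreover have "(lam - int n) * (int n + 1) \<ge> lam"
  proof -
    have "(lam - int n) * (int n + 1) - lam = int n * (lam - int n - 1)" by (simp add: algebra_simps)
    moreover have "int n * (lam - int n - 1) \<ge> 0" using assms by simp
    ultimately show ?thesis by linarith
  qed
  ultimately show ?thesis by (simp add: algebra_simps)
qed

definition good :: "nat \<Rightarrow> int \<times> int \<Rightarrow> bool" where
  "good n p \<longleftrightarrow> 0 \<le> fst p \<and> fst p \<le> 4 ^ n - 1 \<and> 0 \<le> snd p \<and> snd p \<le> int n * 4 ^ n \<and>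
     (\<forall>lam. lam \<ge> int n + 1 \<longrightarrow> snd p - lam * fst p \<le> 0 \<and> snd p - lam * fst p \<ge> (int n - lam) * 4 ^ n + lam)"

lemma good_mono: assumes "good m p" shows "good (Suc m) p"
  unfolding good_def
proof (intro conjI allI impI)
  let ?P = "(4::int) ^ m"
  have P: "?P > 0" by simp
  note g = assms[unfolded good_def]
  show "0 \<le> fst p" "0 \<le> snd p" using g by auto
  show "fst p \<le> 4 ^ Suc m - 1" using g P by simp
  have "snd p \<le> int m * ?P" using g by simp
  also have "\<dots> \<le> int (Suc m) * 4 ^ Suc m" using P by (simp add: algebra_simps mult_left_mono)
  finally show "snd p \<le> int (Suc m) * 4 ^ Suc m" .
  fix lam :: int assume l: "lam \<ge> int (Suc m) + 1"
  then show "snd p - lam * fst p \<le> 0" using g by simp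
  have h: "snd p - lam * fst p \<ge> (int m - lam) * ?P + lam" using g l by simp
  have "(int m - lam) * ?P \<ge> (int (Suc m) - lam) * 4 ^ Suc m"
  proof -
    have "(int m - lam) * ?P - (int (Suc m) - lam) * 4 ^ Suc m = (3*(lam - int m) - 4) * ?P"
      by (simp add: algebra_simps)
    moreover have "(3*(lam - int m) - 4) * ?P \<ge> 0" using l P by simp
    ultimately show ?thesis by linarith
  qed
  then show "snd p - lam * fst p \<ge> (int (Suc m) - lam) * 4 ^ Suc m + lam" using h by linarith
qed

lemma good_shift: assumes "good m p" shows "good (Suc m) (sh (Suc m) p)"
  unfolding good_def
proof (intro conjI allI impI)
  let ?P = "(4::int) ^ m"
  have P: "?P > 0" by simp
  note g = assms[unfolded good_def]
  have d: "delta (Suc m) = 3 * ?P" "delta' (Suc m) = (3 * int m + 4) * ?P"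
    by (simp_all add: delta_def delta'_def algebra_simps)
  have s: "fst (sh (Suc m) p) = fst p + 3 * ?P" "snd (sh (Suc m) p) = snd p + (3 * int m + 4) * ?P"
    by (simp_all add: sh_def d)
  show "0 \<le> fst (sh (Suc m) p)" "0 \<le> snd (sh (Suc m) p)" using g P s by auto
  show "fst (sh (Suc m) p) \<le> 4 ^ Suc m - 1" using g s by simp
  show "snd (sh (Suc m) p) \<le> int (Suc m) * 4 ^ Suc m" using g s by (simp add: algebra_simps)
  fix lam :: int assume l: "lam \<ge> int (Suc m) + 1"
  have e: "snd (sh (Suc m) p) - lam * fst (sh (Suc m) p) = (snd p - lam * fst p) + (3 * int m + 4 - 3*lam) * ?P"
    using s by (simp add: algebra_simps)
  have "(3 * int m + 4 - 3*lam) * ?P \<le> 0" using l P by (simp add: mult_nonpos_nonneg)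
  moreover have "snd p - lam * fst p \<le> 0" using g l by simp
  ultimately show "snd (sh (Suc m) p) - lam * fst (sh (Suc m) p) \<le> 0" using e by linarith
  have h: "snd p - lam * fst p \<ge> (int m - lam) * ?P + lam" using g l by simp
  have "(int m - lam) * ?P + (3 * int m + 4 - 3*lam) * ?P = (int (Suc m) - lam) * 4 ^ Suc m"
    by (simp add: algebra_simps)
  then show "snd (sh (Suc m) p) - lam * fst (sh (Suc m) p) \<ge> (int (Suc m) - lam) * 4 ^ Suc m + lam"
    using e h by linarith
qed

lemma Skl_good: "p \<in> Skl k l \<Longrightarrow> good (k+l-1) p"
proof (induction k l arbitrary: p rule: Skl.induct)
  case (1 k l)
  note IH1 = "1.IH"(1) and IH2 = "1.IH"(2) and pm = "1.prems"
  show ?case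
  proof (cases "k \<le> 2 \<or> l \<le> 2")
    case True
    then have "p = (0,0)" using pm Skl_base by blast
    then show ?thesis unfolding good_def using base_ineq by auto
  next
    case False
    define m where "m = k + l - 2"
    have km: "k - 1 + l - 1 = m" "k + (l - 1) - 1 = m" "k + l - 1 = Suc m" using False by (auto simp: m_def)
    have "p \<in> Skl (k-1) l \<or> (\<exists>q. q \<in> Skl k (l-1) \<and> p = sh (k+l-1) q)"
      using pm unfolding Skl_step[OF False] by blast
    then show ?thesis
    proof
      assume "p \<in> Skl (k-1) l"
      then have "good m p" using IH1[OF False] km by metis
      then show ?thesis using good_mono km by metis
    next
      assume "\<exists>q. q \<in> Skl k (l-1) \<and> p = sh (k+l-1) q"
      then obtain q where q: "q \<in> Skl k (l-1)" "p = sh (k+l-1) q" by blast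
      then have "good m q" using IH2[OF False] km by metis
      then show ?thesis using good_shift km q by metis
    qed
  qed
qed

lemma cross_level:
  assumes ga: "good m a" and gb: "good m b0" and b: "b = sh (Suc m) b0"
  shows "fst a < fst b" "snd b - snd a - int (Suc m) * (fst b - fst a) > 0"
        "snd b - snd a < int (Suc m + 1) * (fst b - fst a)"
proof -
  let ?P = "(4::int) ^ m"
  have P: "?P > 0" by simp
  note a = ga[unfolded good_def] and g = gb[unfolded good_def]
  have d: "delta (Suc m) = 3 * ?P" "delta' (Suc m) = (3 * int m + 4) * ?P"
    by (simp_all add: delta_def delta'_def algebra_simps)
  have s: "fst b = fst b0 + 3 * ?P" "snd b = snd b0 + (3 * int m + 4) * ?P"
    by (simp_all add: b sh_def d)
  show "fst a < fst b" using a g s P by simp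
  have gl: "\<forall>lam. lam \<ge> int m + 1 \<longrightarrow> snd b0 - lam * fst b0 \<le> 0 \<and> snd b0 - lam * fst b0 \<ge> (int m - lam) * ?P + lam"
    using g by blast
  have al: "\<forall>lam. lam \<ge> int m + 1 \<longrightarrow> snd a - lam * fst a \<le> 0 \<and> snd a - lam * fst a \<ge> (int m - lam) * ?P + lam"
    using a by blast
  have h1: "snd b0 - int (Suc m) * fst b0 \<ge> (int m - int (Suc m)) * ?P + int (Suc m)" using gl[rule_format, of "int (Suc m)"] by simp
  have h2: "snd a - int (Suc m) * fst a \<le> 0" using al[rule_format, of "int (Suc m)"] by simp
  have e1: "snd b - int (Suc m) * fst b = (snd b0 - int (Suc m) * fst b0) + ?P" using s by (simp add: algebra_simps)
  have e2: "(int m - int (Suc m)) * ?P = - ?P" by simp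
  have "snd b - int (Suc m) * fst b > snd a - int (Suc m) * fst a" using h1 h2 e1 e2 by linarith
  then show "snd b - snd a - int (Suc m) * (fst b - fst a) > 0" by (simp add: algebra_simps)
  have h3: "snd b0 - int (Suc m + 1) * fst b0 \<le> 0" using gl[rule_format, of "int (Suc m + 1)"] by simp
  have h4: "snd a - int (Suc m + 1) * fst a \<ge> (int m - int (Suc m + 1)) * ?P + int (Suc m + 1)" using al[rule_format, of "int (Suc m + 1)"] by simp
  have e3: "snd b - int (Suc m + 1) * fst b = (snd b0 - int (Suc m + 1) * fst b0) - 2 * ?P" using s by (simp add: algebra_simps)
  have e4: "(int m - int (Suc m + 1)) * ?P = - 2 * ?P" by simp
  have "snd b - int (Suc m + 1) * fst b < snd a - int (Suc m + 1) * fst a" using h3 h4 e3 e4 by linarith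
  then show "snd b - snd a < int (Suc m + 1) * (fst b - fst a)" by (simp add: algebra_simps)
qed

definition pairs_ok :: "nat \<Rightarrow> (int \<times> int) set \<Rightarrow> bool" where
  "pairs_ok n S \<longleftrightarrow> (\<forall>p\<in>S. \<forall>q\<in>S. (p \<noteq> q \<longrightarrow> fst p \<noteq> fst q) \<and>
      (fst p < fst q \<longrightarrow> fst q - fst p < snd q - snd p \<and> snd q - snd p < int n * (fst q - fst p)))"

lemma pairs_ok_sh: "pairs_ok n S \<Longrightarrow> pairs_ok n (sh r ` S)"
  unfolding pairs_ok_def sh_def by (auto simp: prod_eq_iff)

lemma pairs_ok_mono: "pairs_ok n S \<Longrightarrow> n \<le> n' \<Longrightarrow> pairs_ok n' S"
  unfolding pairs_ok_def
  by (smt (verit, best) mult_right_mono of_nat_mono)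

lemma Skl_pairs: "pairs_ok (k+l) (Skl k l)"
proof (induction k l rule: Skl.induct)
  case (1 k l)
  note IH1 = "1.IH"(1) and IH2 = "1.IH"(2)
  show ?case
  proof (cases "k \<le> 2 \<or> l \<le> 2")
    case True
    then show ?thesis using Skl_base[OF True] unfolding pairs_ok_def by auto
  next
    case False
    define m where "m = k + l - 2"
    have km: "k - 1 + l = Suc m" "k + (l - 1) = Suc m" "k + l - 1 = Suc m" "k + l = Suc m + 1"
      "k - 1 + l - 1 = m" "k + (l - 1) - 1 = m"using False by (auto simp: m_def)
    have pA: "pairs_ok (k+l) (Skl (k-1) l)" using pairs_ok_mono[OF IH1[OF False]] by simp
    have pB: "pairs_ok (k+l) (sh (k+l-1) ` Skl k (l-1))" using pairs_ok_mono[OF pairs_ok_sh[OF IH2[OF False]]] by simp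
    have cr: "fst a < fst b \<and> fst b - fst a < snd b - snd a \<and> snd b - snd a < int (k+l) * (fst b - fst a)"
      if a: "a \<in> Skl (k-1) l" and b: "b \<in> sh (k+l-1) ` Skl k (l-1)" for a b
    proof -
      obtain b0 where b0: "b0 \<in> Skl k (l-1)" "b = sh (Suc m) b0" using b km by auto
      have ga: "good m a" using Skl_good[OF a] km by simp
      have gb: "good m b0" using Skl_good[OF b0(1)] km by simp
      note c = cross_level[OF ga gb b0(2)]
      have "int (Suc m) * (fst b - fst a) \<ge> fst b - fst a" using c(1) by simp
      then have "fst b - fst a < snd b - snd a" using c(2) by linarith
      then show ?thesis using c km by simp
    qed
    show ?thesis unfolding Skl_step[OF False] pairs_ok_def
    proof (intro ballI)
      fix p q assume p: "p \<in> Skl (k - 1) l \<union> sh (k + l - 1) ` Skl k (l - 1)"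
        and q: "q \<in> Skl (k - 1) l \<union> sh (k + l - 1) ` Skl k (l - 1)"
      show "(p \<noteq> q \<longrightarrow> fst p \<noteq> fst q) \<and>
        (fst p < fst q \<longrightarrow> fst q - fst p < snd q - snd p \<and> snd q - snd p < int (k + l) * (fst q - fst p))"
        using p q pA pB cr[of p q] cr[of q p] unfolding pairs_ok_def by auto
    qed
  qed
qed

lemma Skl_finite: "finite (Skl k l)"
proof (induction k l rule: Skl.induct)
  case (1 k l)
  then show ?case
    by (cases "k \<le> 2 \<or> l \<le> 2") (simp_all add: Skl_base Skl_step)
qed

definition cross3 :: "int \<times> int \<Rightarrow> int \<times> int \<Rightarrow> int \<times> int \<Rightarrow> int" where
  "cross3 a b c = (fst b - fst a) * (snd c - snd b) - (snd b - snd a) * (fst c - fst b)"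

definition cup :: "(int \<times> int) set \<Rightarrow> bool" where
  "cup C \<longleftrightarrow> (\<forall>a\<in>C. \<forall>b\<in>C. \<forall>c\<in>C. fst a < fst b \<longrightarrow> fst b < fst c \<longrightarrow> cross3 a b c > 0)"

definition cap :: "(int \<times> int) set \<Rightarrow> bool" where
  "cap C \<longleftrightarrow> (\<forall>a\<in>C. \<forall>b\<in>C. \<forall>c\<in>C. fst a < fst b \<longrightarrow> fst b < fst c \<longrightarrow> cross3 a b c < 0)"

lemma cross3_id:
  "al * cross3 a b c = (fst b - fst a) * (al*(snd c - snd b) - be*(fst c - fst b)) - (al*(snd b - snd a) - be*(fst b - fst a)) * (fst c - fst b)"
  by (simp add: cross3_def algebra_simps)

lemma cross3_neg:
  fixes al be :: int
  assumes "al > 0" "fst a < fst b" "fst b < fst c"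
    "al*(snd b - snd a) - be*(fst b - fst a) > 0" "al*(snd c - snd b) - be*(fst c - fst b) < 0"
  shows "cross3 a b c < 0"
proof -
  have "(fst b - fst a) * (al*(snd c - snd b) - be*(fst c - fst b)) < 0"
    using assms by (intro mult_pos_neg) auto
  moreover have "(al*(snd b - snd a) - be*(fst b - fst a)) * (fst c - fst b) > 0"
    using assms by (intro mult_pos_pos) auto
  ultimately have "al * cross3 a b c < 0" unfolding cross3_id[of al a b c be] by linarith
  then show ?thesis using assms(1) by (simp add: mult_less_0_iff)
qed

lemma cross3_pos:
  fixes al be :: int
  assumes "al > 0" "fst a < fst b" "fst b < fst c"
    "al*(snd b - snd a) - be*(fst b - fst a) < 0" "al*(snd c - snd b) - be*(fst c - fst b) > 0"
  shows "cross3 a b c > 0"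
proof -
  have "(fst b - fst a) * (al*(snd c - snd b) - be*(fst c - fst b)) > 0"
    using assms by (intro mult_pos_pos) auto
  moreover have "(al*(snd b - snd a) - be*(fst b - fst a)) * (fst c - fst b) < 0"
    using assms by (intro mult_neg_pos) auto
  ultimately have "al * cross3 a b c > 0" unfolding cross3_id[of al a b c be] by linarith
  then show ?thesis using assms(1) by (simp add: zero_less_mult_iff)
qed

lemma cup_subset: "cup C \<Longrightarrow> D \<subseteq> C \<Longrightarrow> cup D"
  unfolding cup_def by blast
lemma cap_subset: "cap C \<Longrightarrow> D \<subseteq> C \<Longrightarrow> cap D"
  unfolding cap_def by blast

definition tr :: "int \<times> int \<Rightarrow> int \<times> int \<Rightarrow> int \<times> int" where
  "tr d p = (fst p + fst d, snd p + snd d)"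

lemma inj_tr: "inj (tr d)" unfolding inj_def tr_def by (auto simp: prod_eq_iff)

lemma cross3_tr: "cross3 (tr d a) (tr d b) (tr d c) = cross3 a b c"
  unfolding cross3_def tr_def by simp

lemma cup_tr: "cup C \<Longrightarrow> cup (tr d ` C)"
  unfolding cup_def by (auto simp: cross3_tr) (simp add: tr_def)
lemma cap_tr: "cap C \<Longrightarrow> cap (tr d ` C)"
  unfolding cap_def by (auto simp: cross3_tr) (simp add: tr_def)

lemma sh_tr: "sh r = tr (delta r, delta' r)"
  unfolding sh_def tr_def by auto

lemma tr_inv: "tr (- fst d, - snd d) (tr d p) = p"
  unfolding tr_def by simp

lemma untr_sub:
  assumes "C \<subseteq> tr d ` B"
  shows "tr (- fst d, - snd d) ` C \<subseteq> B" "card (tr (- fst d, - snd d) ` C) = card C"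
proof -
  show "tr (- fst d, - snd d) ` C \<subseteq> B" using assms tr_inv by (smt (verit, ccfv_SIG) image_iff subsetD subsetI)
  show "card (tr (- fst d, - snd d) ` C) = card C"
    by (rule card_image) (meson inj_tr inj_on_subset subset_UNIV)
qed

lemma card_le1: "finite C \<Longrightarrow> (\<And>x y. x \<in> C \<Longrightarrow> y \<in> C \<Longrightarrow> x = y) \<Longrightarrow> card C \<le> 1"
  by (simp add: card_le_Suc0_iff_eq)

lemma one_pt:
  fixes D :: "(int \<times> int) set"
  assumes "finite D" "\<And>x y. x \<in> D \<Longrightarrow> y \<in> D \<Longrightarrow> fst x < fst y \<Longrightarrow> False"
    "\<And>x y. x \<in> D \<Longrightarrow> y \<in> D \<Longrightarrow> fst x = fst y \<Longrightarrow> x = y"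
  shows "card D \<le> 1"
proof (rule card_le1[OF assms(1)])
  fix x y assume xy: "x \<in> D" "y \<in> D"
  then have "\<not> fst x < fst y" "\<not> fst y < fst x" using assms(2) by blast+
  then have "fst x = fst y" by simp
  then show "x = y" using assms(3) xy by blast
qed

lemma Skl_cupcap:
  "2 \<le> k \<Longrightarrow> 2 \<le> l \<Longrightarrow> C \<subseteq> Skl k l \<Longrightarrow> (cup C \<longrightarrow> card C \<le> k - 1) \<and> (cap C \<longrightarrow> card C \<le> l - 1)"
proof (induction k l arbitrary: C rule: Skl.induct)
  case (1 k l)
  note IH1 = "1.IH"(1) and IH2 = "1.IH"(2)
  have fC: "finite C" using "1.prems"(3) Skl_finite finite_subset by blast
  show ?case
  proof (cases "k \<le> 2 \<or> l \<le> 2")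
    case True
    have "card C \<le> card {(0::int,0::int)}"
      using "1.prems"(3) unfolding Skl_base[OF True] by (intro card_mono) auto
    then have "card C \<le> 1" by simp
    then show ?thesis using "1.prems"(1,2) by linarith
  next
    case False
    define m where "m = k + l - 2"
    have km: "k - 1 + l = Suc m" "k + (l - 1) = Suc m" "k + l - 1 = Suc m" "k + l = Suc m + 1"
      "k - 1 + l - 1 = m" "k + (l - 1) - 1 = m"using False by (auto simp: m_def)
    define A where "A = Skl (k-1) l"
    define B where "B = Skl k (l-1)"
    define d where "d = (delta (Suc m), delta' (Suc m))"
    define B' where "B' = tr d ` B"
    have CAB: "C \<subseteq> A \<union> B'" using "1.prems"(3) Skl_step[OF False] km
      unfolding A_def B_def d_def sh_tr B'_def by simp
    have pA: "pairs_ok (Suc m) A" using Skl_pairs[of "k-1" l] km A_def by simp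
    have pB: "pairs_ok (Suc m) B'" using pairs_ok_sh[OF Skl_pairs[of k "l-1"], of "Suc m"] km
      unfolding B_def d_def sh_tr B'_def by simp
    have cr: "fst a < fst b \<and> 1*(snd b - snd a) - int (Suc m) * (fst b - fst a) > 0"
      if a: "a \<in> A" and b: "b \<in> B'" for a b
    proof -
      obtain b0 where b0: "b0 \<in> B" "b = sh (Suc m) b0" using b unfolding d_def sh_tr B'_def by auto
      have ga: "good m a" using Skl_good[of a "k-1" l] a km A_def by simp
      have gb: "good m b0" using Skl_good[of b0 k "l-1"] b0(1) km B_def by simp
      note c = cross_level[OF ga gb b0(2)]
      then show ?thesis by simp
    qed
    have inA: "1*(snd q - snd p) - int (Suc m) * (fst q - fst p) < 0" if "p \<in> A" "q \<in> A" "fst p < fst q" for p q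
      using pA that unfolding pairs_ok_def by auto
    have inB: "1*(snd q - snd p) - int (Suc m) * (fst q - fst p) < 0" if "p \<in> B'" "q \<in> B'" "fst p < fst q" for p q
      using pB that unfolding pairs_ok_def by auto
    have dA: "p = q" if "p \<in> A" "q \<in> A" "fst p = fst q" for p q
      using pA that unfolding pairs_ok_def by blast
    have dB: "p = q" if "p \<in> B'" "q \<in> B'" "fst p = fst q" for p q
      using pB that unfolding pairs_ok_def by blast
    have Csplit: "card C \<le> card (C \<inter> A) + card (C \<inter> B')"
    proof -
      have "C = (C \<inter> A) \<union> (C \<inter> B')" using CAB by blast
      then show ?thesis by (metis card_Un_le)
    qed
    have fA: "finite (C \<inter> A)" "finite (C \<inter> B')" using fC by auto
    have cardB: "card (C \<inter> B') = card (tr (- fst d, - snd d) ` (C \<inter> B'))"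
      and subB: "tr (- fst d, - snd d) ` (C \<inter> B') \<subseteq> Skl k (l-1)"
      using untr_sub[of "C \<inter> B'" d B] unfolding B'_def B_def by auto
    have subA: "C \<inter> A \<subseteq> Skl (k-1) l" unfolding A_def by blast
    have k1: "2 \<le> k - 1" "2 \<le> l - 1" using False by auto
    note IHA = IH1[OF False k1(1) "1.prems"(2) subA]
    note IHB = IH2[OF False "1.prems"(1) k1(2) subB]
    show ?thesis
    proof (intro conjI impI)
      assume cupC: "cup C"
      have cB: "card (C \<inter> B') \<le> k - 1"
        using IHB cup_tr[OF cup_subset[OF cupC, of "C \<inter> B'"]] cardB by simp
      show "card C \<le> k - 1"
      proof (cases "C \<inter> A = {}")
        case True
        then show ?thesis using Csplit cB by simp
      next
        case False
        then obtain a where a: "a \<in> C" "a \<in> A" by blast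
        have "card (C \<inter> B') \<le> 1"
        proof (rule one_pt[OF fA(2)])
          fix x y assume x: "x \<in> C \<inter> B'" and y: "y \<in> C \<inter> B'" and xy: "fst x < fst y"
          have c1: "fst a < fst x \<and> 1*(snd x - snd a) - int (Suc m) * (fst x - fst a) > 0"
            using cr a(2) x by blast
          have c2: "1*(snd y - snd x) - int (Suc m) * (fst y - fst x) < 0" using inB x y xy by blast
          have "cross3 a x y < 0"
            by (rule cross3_neg[of 1 a x y "int (Suc m)"]) (use c1 c2 xy in auto)
          moreover have "cross3 a x y > 0" using cupC a(1) x y xy c1 unfolding cup_def by blast
          ultimately show False by simp
        next
          fix x y assume "x \<in> C \<inter> B'" "y \<in> C \<inter> B'" "fst x = fst y"
          then show "x = y" using dB by blast
        qed
        moreover have "card (C \<inter> A) \<le> k - 1 - 1"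
          using IHA cup_subset[OF cupC, of "C \<inter> A"] by simp
        ultimately show ?thesis using Csplit k1 by linarith
      qed
    next
      assume capC: "cap C"
      have cA: "card (C \<inter> A) \<le> l - 1"
        using IHA cap_subset[OF capC, of "C \<inter> A"] by simp
      show "card C \<le> l - 1"
      proof (cases "C \<inter> B' = {}")
        case True
        then show ?thesis using Csplit cA by simp
      next
        case False
        then obtain b where b: "b \<in> C" "b \<in> B'" by blast
        have "card (C \<inter> A) \<le> 1"
        proof (rule one_pt[OF fA(1)])
          fix x y assume x: "x \<in> C \<inter> A" and y: "y \<in> C \<inter> A" and xy: "fst x < fst y"
          have c1: "fst y < fst b \<and> 1*(snd b - snd y) - int (Suc m) * (fst b - fst y) > 0"
            using cr b(2) y by blast
          have c2: "1*(snd y - snd x) - int (Suc m) * (fst y - fst x) < 0" using inA x y xy by blast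
          have "cross3 x y b > 0"
            by (rule cross3_pos[of 1 x y b "int (Suc m)"]) (use c1 c2 xy in auto)
          moreover have "cross3 x y b < 0" using capC b(1) x y xy c1 unfolding cap_def by blast
          ultimately show False by simp
        next
          fix x y assume "x \<in> C \<inter> A" "y \<in> C \<inter> A" "fst x = fst y"
          then show "x = y" using dA by blast
        qed
        moreover have "card (C \<inter> B') \<le> l - 1 - 1"
          using IHB cap_tr[OF cap_subset[OF capC, of "C \<inter> B'"]] cardB by simp
        ultimately show ?thesis using Csplit k1 by linarith
      qed
    qed
  qed
qed



definition cc :: "nat \<Rightarrow> int" where "cc t = (int t + 1) * 4 ^ (t + 1)"

definition copy :: "nat \<Rightarrow> nat \<Rightarrow> (int \<times> int) set" where
  "copy t i = tr (q t i) ` Skl (t - i) (i + 2)"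

lemma q_eq: "q t i = (cc t * fst (w t i), cc t * snd (w t i))"
  by (simp add: q_def cc_def Let_def)

lemma St_eq: "St t = (\<Union>i\<in>{0..t-2}. copy t i)"
  unfolding St_def copy_def tr_def by simp

lemma pairs_ok_tr: "pairs_ok n S \<Longrightarrow> pairs_ok n (tr d ` S)"
  unfolding pairs_ok_def tr_def by (auto simp: prod_eq_iff)

lemma copy_pt:
  assumes "i \<le> t - 2" "p \<in> copy t i"
  shows "\<exists>p'. p' \<in> Skl (t - i) (i + 2) \<and> good (t + 1) p' \<and> fst p = cc t * fst (w t i) + fst p' \<and> snd p = cc t * snd (w t i) + snd p'"
proof -
  obtain p' where p': "p' \<in> Skl (t - i) (i + 2)" "p = tr (q t i) p'" using assms(2) unfolding copy_def by auto
  have "t - i + (i + 2) - 1 = t + 1" using assms(1) by simp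
  then have "good (t + 1) p'" using Skl_good[OF p'(1)] by simp
  then show ?thesis using p' by (auto simp: tr_def q_eq)
qed

lemma fx_mono: "i \<le> j \<Longrightarrow> j \<le> t \<Longrightarrow> fst (w t j) - fst (w t i) \<ge> 3 * (int j - int i)"
proof (induction j rule: dec_induct)
  case base
  then show ?case by simp
next
  case (step j)
  have "fst (w t (Suc j)) = fst (w t j) + 3 * (int t - int j)" by (simp add: v_def)
  moreover have "int t - int j \<ge> 1" using step by simp
  ultimately show ?case using step by simp
qed

lemma fy_mono: "i \<le> j \<Longrightarrow> snd (w t j) \<le> snd (w t i)"
proof (induction j rule: dec_induct)
  case base
  then show ?case by simp
next
  case (step j)
  have "snd (w t (Suc j)) = snd (w t j) - 3 * int j" by (simp add: v_def)
  then show ?case using step by simp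
qed

lemma copy_range:
  assumes "i \<le> t - 2" "p \<in> copy t i"
  shows "cc t * fst (w t i) \<le> fst p" "fst p \<le> cc t * fst (w t i) + 4 ^ (t+1) - 1"
    "cc t * snd (w t i) \<le> snd p" "snd p \<le> cc t * snd (w t i) + cc t"
proof -
  obtain p' where p': "good (t + 1) p'" "fst p = cc t * fst (w t i) + fst p'" "snd p = cc t * snd (w t i) + snd p'"
    using copy_pt[OF assms] by blast
  have e: "int (t + 1) * 4 ^ (t + 1) = cc t" by (simp add: cc_def)
  have g: "0 \<le> fst p'" "fst p' \<le> 4 ^ (t + 1) - 1" "0 \<le> snd p'" "snd p' \<le> int (t + 1) * 4 ^ (t + 1)"
    using p'(1) unfolding good_def by auto
  show "cc t * fst (w t i) \<le> fst p"  "fst p \<le> cc t * fst (w t i) + 4 ^ (t+1) - 1"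
    "cc t * snd (w t i) \<le> snd p" "snd p \<le> cc t * snd (w t i) + cc t"
    using g p' e by linarith+
qed

lemma cc_ge: "cc t \<ge> 4 ^ (t + 1)" "cc t > 0" "cc t \<ge> 0"
  unfolding cc_def by auto

lemma sepx:
  assumes "i < j" "j \<le> t - 2" "a \<in> copy t i" "b \<in> copy t j"
  shows "fst b - fst a > cc t" "fst a < fst b"
proof -
  have ij: "i \<le> t - 2" using assms by simp
  have jt: "j \<le> t" using assms by simp
  have "fst (w t j) - fst (w t i) \<ge> 3 * (int j - int i)" using fx_mono[of i j t] assms(1) jt by simp
  moreover have "int j - int i \<ge> 1" using assms(1) by simp
  ultimately have "fst (w t j) - fst (w t i) \<ge> 3" by (smt (verit))
  then have "cc t * (fst (w t j) - fst (w t i)) \<ge> cc t * 3" using cc_ge(3) by (rule mult_left_mono)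
  moreover note copy_range[OF ij assms(3)] copy_range[OF assms(2,4)]
  moreover have "cc t * (fst (w t j) - fst (w t i)) = cc t * fst (w t j) - cc t * fst (w t i)" by (simp add: algebra_simps)
  ultimately show "fst b - fst a > cc t" using cc_ge(1,2)[of t] by linarith
  then show "fst a < fst b" using cc_ge(2)[of t] by linarith
qed

lemma G1b:
  assumes "i < j" "j \<le> t - 2" "a \<in> copy t i" "b \<in> copy t j"
  shows "1 * (snd b - snd a) - 1 * (fst b - fst a) < 0"
proof -
  have ij: "i \<le> t - 2" using assms by simp
  have "snd (w t j) \<le> snd (w t i)" using fy_mono assms by simp
  then have "cc t * snd (w t j) \<le> cc t * snd (w t i)" using cc_ge(3) by (rule mult_left_mono)
  then have "snd b - snd a \<le> cc t" using copy_range[OF ij assms(3)] copy_range[OF assms(2,4)] by linarith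
  then show ?thesis using sepx[OF assms] by (simp only: mult_1_left)
qed

lemma copy_pairs:
  assumes "i \<le> t - 2"
  shows "pairs_ok (t + 2) (copy t i)"
proof -
  have "pairs_ok (t - i + (i + 2)) (Skl (t - i) (i + 2))" by (rule Skl_pairs)
  moreover have "t - i + (i + 2) = t + 2" using assms by simp
  ultimately show ?thesis unfolding copy_def using pairs_ok_tr by simp
qed

lemma G1a:
  assumes "i \<le> t - 2" "a \<in> copy t i" "b \<in> copy t i" "fst a < fst b"
  shows "1 * (snd b - snd a) - 1 * (fst b - fst a) > 0"
  using copy_pairs[OF assms(1)] assms(2-4) unfolding pairs_ok_def by auto

lemma copy_dist:
  assumes "i \<le> t - 2" "a \<in> copy t i" "b \<in> copy t i" "fst a = fst b"
  shows "a = b"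
  using copy_pairs[OF assms(1)] assms(2-4) unfolding pairs_ok_def by blast

definition FF :: "nat \<Rightarrow> nat \<Rightarrow> nat \<Rightarrow> int" where
  "FF t m j = (2 * int t - 2 * int m + 1) * snd (w t j) - (1 - 2 * int m) * fst (w t j)"

lemma FF_step: "FF t m (Suc j) - FF t m j = 3 * int t * (2 * int m - 2 * int j - 1)"
  unfolding FF_def by (simp add: v_def algebra_simps)

lemma FF_up: "i \<le> j \<Longrightarrow> j \<le> m \<Longrightarrow> FF t m j - FF t m i \<ge> 3 * int t * (int j - int i)"
proof (induction j rule: dec_induct)
  case base
  then show ?case by simp
next
  case (step j)
  have "2 * int m - 2 * int j - 1 \<ge> 1" using step by simp
  then have "3 * int t * (2 * int m - 2 * int j - 1) \<ge> 3 * int t * 1" by (intro mult_left_mono) auto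
  then show ?case using step FF_step[of t m j] by (simp add: algebra_simps)
qed

lemma FF_down: "i \<le> j \<Longrightarrow> m \<le> i \<Longrightarrow> FF t m j - FF t m i \<le> - 3 * int t * (int j - int i)"
proof (induction j rule: dec_induct)
  case base
  then show ?case by simp
next
  case (step j)
  have "2 * int m - 2 * int j - 1 \<le> -1" using step by simp
  then have "3 * int t * (2 * int m - 2 * int j - 1) \<le> 3 * int t * (-1)" by (intro mult_left_mono) auto
  then show ?case using step FF_step[of t m j] by (simp add: algebra_simps)
qed



lemma pert:
  assumes "i \<le> t - 2" "j \<le> t - 2" "a \<in> copy t i" "b \<in> copy t j" "1 \<le> m" "m \<le> t - 2"
  shows "\<exists>E. (2 * int t - 2 * int m + 1) * (snd b - snd a) - (1 - 2 * int m) * (fst b - fst a)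
           = cc t * (FF t m j - FF t m i) + E \<and> \<bar>E\<bar> < 3 * int t * cc t"
proof -
  obtain a' where a': "good (t + 1) a'" "fst a = cc t * fst (w t i) + fst a'" "snd a = cc t * snd (w t i) + snd a'"
    using copy_pt[OF assms(1,3)] by blast
  obtain b' where b': "good (t + 1) b'" "fst b = cc t * fst (w t j) + fst b'" "snd b = cc t * snd (w t j) + snd b'"
    using copy_pt[OF assms(2,4)] by blast
  define al where "al = 2 * int t - 2 * int m + 1"
  define be where "be = 1 - 2 * int m"
  define P where "P = (4::int) ^ (t + 1)"
  have ccP: "cc t = (int t + 1) * P" unfolding cc_def P_def by simp
  have P0: "P > 0" unfolding P_def by simp
  have e: "int (t + 1) * 4 ^ (t + 1) = cc t" by (simp add: cc_def)
  have ga: "0 \<le> fst a'" "fst a' \<le> P - 1" "0 \<le> snd a'" "snd a' \<le> cc t"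
    using a'(1) e unfolding good_def P_def by auto
  have gb: "0 \<le> fst b'" "fst b' \<le> P - 1" "0 \<le> snd b'" "snd b' \<le> cc t"
    using b'(1) e unfolding good_def P_def by auto
  define E where "E = al * (snd b' - snd a') - be * (fst b' - fst a')"
  have id: "al * (snd b - snd a) - be * (fst b - fst a) = cc t * (FF t m j - FF t m i) + E"
    unfolding E_def FF_def al_def be_def a'(2,3) b'(2,3) by (simp add: algebra_simps)
  have t3: "int t \<ge> 3" using assms(5,6) by simp
  have al1: "0 < al" "al \<le> 2 * int t - 1" unfolding al_def using assms(5,6) by auto
  have be1: "\<bar>be\<bar> \<le> 2 * int t" unfolding be_def using assms(5,6) by auto
  have dy: "\<bar>snd b' - snd a'\<bar> \<le> cc t" using ga gb by auto
  have dx: "\<bar>fst b' - fst a'\<bar> \<le> P - 1" using ga gb by auto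
  have "\<bar>al * (snd b' - snd a')\<bar> = al * \<bar>snd b' - snd a'\<bar>" using al1 by (simp add: abs_mult)
  also have "\<dots> \<le> (2 * int t - 1) * cc t" using al1 dy cc_ge(3)[of t] by (intro mult_mono) auto
  finally have E1: "\<bar>al * (snd b' - snd a')\<bar> \<le> (2 * int t - 1) * cc t" .
  have "\<bar>be * (fst b' - fst a')\<bar> = \<bar>be\<bar> * \<bar>fst b' - fst a'\<bar>" by (simp add: abs_mult)
  also have "\<dots> \<le> (2 * int t) * (P - 1)" using be1 dx P0 by (intro mult_mono) auto
  finally have E2: "\<bar>be * (fst b' - fst a')\<bar> \<le> 2 * int t * (P - 1)" .
  have E3: "\<bar>E\<bar> \<le> \<bar>al * (snd b' - snd a')\<bar> + \<bar>be * (fst b' - fst a')\<bar>"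
    unfolding E_def by (rule abs_triangle_ineq4)
  have "2 * int t * (P - 1) < (int t + 1) * cc t"
  proof -
    have "2 * int t * (P - 1) < 2 * int t * P" using t3 by simp
    also have "\<dots> \<le> ((int t + 1) * (int t + 1)) * P"
    proof -
      have sq: "int t * int t \<ge> 0" by simp
      have "2 * int t \<le> (int t + 1) * (int t + 1)" using sq by (simp add: algebra_simps)
      then show ?thesis using P0 by (intro mult_right_mono) auto
    qed
    also have "\<dots> = (int t + 1) * cc t" unfolding ccP by (simp add: algebra_simps)
    finally show ?thesis .
  qed
  moreover have "(2 * int t - 1) * cc t + (int t + 1) * cc t = 3 * int t * cc t" by (simp add: algebra_simps)
  ultimately have "\<bar>E\<bar> < 3 * int t * cc t" using E1 E2 E3 by linarith
  then show ?thesis using id unfolding al_def be_def by blast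
qed

lemma G2pos:
  assumes "i < j" "j \<le> m" "a \<in> copy t i" "b \<in> copy t j" "1 \<le> m" "m \<le> t - 2"
  shows "(2 * int t - 2 * int m + 1) * (snd b - snd a) - (1 - 2 * int m) * (fst b - fst a) > 0"
proof -
  obtain E where E: "(2 * int t - 2 * int m + 1) * (snd b - snd a) - (1 - 2 * int m) * (fst b - fst a)
           = cc t * (FF t m j - FF t m i) + E" "\<bar>E\<bar> < 3 * int t * cc t"
    using pert[of i t j a b m] assms by auto
  have "FF t m j - FF t m i \<ge> 3 * int t * (int j - int i)" using FF_up[of i j m t] assms by simp
  moreover have "3 * int t * (int j - int i) \<ge> 3 * int t * 1" using assms(1) by (intro mult_left_mono) auto
  ultimately have "FF t m j - FF t m i \<ge> 3 * int t" by simp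
  then have "cc t * (FF t m j - FF t m i) \<ge> cc t * (3 * int t)" using cc_ge(3)[of t] by (rule mult_left_mono)
  then show ?thesis using E by (simp add: algebra_simps)
qed

lemma G2neg:
  assumes "i < j" "m \<le> i" "j \<le> t - 2" "a \<in> copy t i" "b \<in> copy t j" "1 \<le> m"
  shows "(2 * int t - 2 * int m + 1) * (snd b - snd a) - (1 - 2 * int m) * (fst b - fst a) < 0"
proof -
  obtain E where E: "(2 * int t - 2 * int m + 1) * (snd b - snd a) - (1 - 2 * int m) * (fst b - fst a)
           = cc t * (FF t m j - FF t m i) + E" "\<bar>E\<bar> < 3 * int t * cc t"
    using pert[of i t j a b m] assms by auto
  have "FF t m j - FF t m i \<le> - 3 * int t * (int j - int i)" using FF_down[of i j m t] assms by simp
  moreover have "3 * int t * (int j - int i) \<ge> 3 * int t * 1" using assms(1) by (intro mult_left_mono) auto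
  ultimately have "FF t m j - FF t m i \<le> - (3 * int t)" by simp
  then have "cc t * (FF t m j - FF t m i) \<le> cc t * (- (3 * int t))" using cc_ge(3)[of t] by (rule mult_left_mono)
  then show ?thesis using E by (simp add: algebra_simps)
qed



definition cidx :: "nat \<Rightarrow> int \<times> int \<Rightarrow> nat" where
  "cidx t p = (SOME i. i \<le> t - 2 \<and> p \<in> copy t i)"

lemma cidx: "p \<in> St t \<Longrightarrow> cidx t p \<le> t - 2 \<and> p \<in> copy t (cidx t p)"
  unfolding cidx_def St_eq by (rule someI_ex) auto

lemma copy_unique: "i \<le> t - 2 \<Longrightarrow> j \<le> t - 2 \<Longrightarrow> p \<in> copy t i \<Longrightarrow> p \<in> copy t j \<Longrightarrow> i = j"
  by (metis less_irrefl linorder_neqE_nat sepx(2))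

lemma cidx_eq: "i \<le> t - 2 \<Longrightarrow> p \<in> copy t i \<Longrightarrow> cidx t p = i"
proof -
  assume a: "i \<le> t - 2" "p \<in> copy t i"
  then have "p \<in> St t" unfolding St_eq by auto
  then show ?thesis using cidx[of p t] copy_unique a by blast
qed

lemma idx_order: "i \<le> t - 2 \<Longrightarrow> j \<le> t - 2 \<Longrightarrow> a \<in> copy t i \<Longrightarrow> b \<in> copy t j \<Longrightarrow> fst a < fst b \<Longrightarrow> i \<le> j"
  by (metis less_asym not_le_imp_less sepx(2))

lemma St_dist: "a \<in> St t \<Longrightarrow> b \<in> St t \<Longrightarrow> fst a = fst b \<Longrightarrow> a = b"
proof -
  assume ab: "a \<in> St t" "b \<in> St t" "fst a = fst b"
  note ca = cidx[OF ab(1)] and cb = cidx[OF ab(2)]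
  have "\<not> cidx t a < cidx t b" using sepx(2)[of "cidx t a" "cidx t b" t a b] ca cb ab(3) by auto
  moreover have "\<not> cidx t b < cidx t a" using sepx(2)[of "cidx t b" "cidx t a" t b a] ca cb ab(3) by auto
  ultimately have "cidx t a = cidx t b" by simp
  then show "a = b" using copy_dist[of "cidx t a" t a b] ca cb ab(3) by simp
qed

lemma St_finite: "finite (St t)"
  unfolding St_eq copy_def using Skl_finite by auto

lemma copy_card_bounds:
  assumes "i \<le> t - 2" "D \<subseteq> copy t i" "t \<ge> 2"
  shows "(cup D \<longrightarrow> card D \<le> t - i - 1) \<and> (cap D \<longrightarrow> card D \<le> i + 1)"
proof -
  define d where "d = q t i"
  have D: "D \<subseteq> tr d ` Skl (t - i) (i + 2)" using assms(2) unfolding copy_def d_def .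
  note u = untr_sub[OF D]
  have k: "2 \<le> t - i" "2 \<le> i + 2" using assms(1,3) by auto
  note S = Skl_cupcap[OF k u(1)]
  show ?thesis using S cup_tr[of D] cap_tr[of D] u(2) by auto
qed

lemma St_cup:
  assumes t: "t \<ge> 2" and C: "C \<subseteq> St t" "cup C" and r: "r \<in> C" "\<forall>p\<in>C. fst p \<le> fst r"
  shows "card C \<le> t - cidx t r"
proof -
  define j where "j = cidx t r"
  have jr: "j \<le> t - 2" "r \<in> copy t j" using cidx[of r t] C r unfolding j_def by auto
  have fC: "finite C" using C St_finite finite_subset by blast
  have Cs: "card C \<le> card (C \<inter> copy t j) + card (C - copy t j)"
  proof -
    have "C = (C \<inter> copy t j) \<union> (C - copy t j)" by blast
    then show ?thesis by (metis card_Un_le)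
  qed
  have c1: "card (C \<inter> copy t j) \<le> t - j - 1"
    using copy_card_bounds[OF jr(1), of "C \<inter> copy t j"] t cup_subset[OF C(2), of "C \<inter> copy t j"] by auto
  have c2: "card (C - copy t j) \<le> 1"
  proof (rule one_pt)
    show "finite (C - copy t j)" using fC by simp
  next
    fix x y assume x: "x \<in> C - copy t j" and y: "y \<in> C - copy t j" and xy: "fst x < fst y"
    have xS: "x \<in> St t" and yS: "y \<in> St t" using x y C by auto
    define ix where "ix = cidx t x"
    define iy where "iy = cidx t y"
    have cx: "ix \<le> t - 2" "x \<in> copy t ix" using cidx[OF xS] ix_def by auto
    have cy: "iy \<le> t - 2" "y \<in> copy t iy" using cidx[OF yS] iy_def by auto
    have ixy: "ix \<le> iy" using idx_order[OF cx(1) cy(1) cx(2) cy(2) xy] .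
    have "y \<noteq> r" using y jr by auto
    then have yr: "fst y < fst r" using r y St_dist[of y t r] yS C by force
    have "iy \<le> j" using idx_order[OF cy(1) jr(1) cy(2) jr(2) yr] .
    moreover have "iy \<noteq> j" using cy y by auto
    ultimately have iyj: "iy < j" by simp
    have "cross3 x y r > 0" using C(2) x y r(1) xy yr unfolding cup_def by blast
    moreover have "cross3 x y r < 0"
    proof (cases "ix = iy")
      case True
      have "1 * (snd y - snd x) - 1 * (fst y - fst x) > 0" using G1a[OF cy(1) _ cy(2) xy] cx(2) True by simp
      moreover have "1 * (snd r - snd y) - 1 * (fst r - fst y) < 0" using G1b[OF iyj jr(1) cy(2) jr(2)] .
      ultimately show ?thesis using cross3_neg[of 1 x y r 1] xy yr by simp
    next
      case False
      then have lt: "ix < iy" using ixy by simp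
      have "(2 * int t - 2 * int iy + 1) * (snd y - snd x) - (1 - 2 * int iy) * (fst y - fst x) > 0"
        using G2pos[OF lt order.refl cx(2) cy(2) _ cy(1)] lt by simp
      moreover have "(2 * int t - 2 * int iy + 1) * (snd r - snd y) - (1 - 2 * int iy) * (fst r - fst y) < 0"
        using G2neg[OF iyj order.refl jr(1) cy(2) jr(2)] lt by simp
      moreover have "2 * int t - 2 * int iy + 1 > 0" using cy(1) by simp
      ultimately show ?thesis using cross3_neg[of "2 * int t - 2 * int iy + 1" x y r "1 - 2 * int iy"] xy yr by simp
    qed
    ultimately show False by simp
  next
    fix x y assume "x \<in> C - copy t j" "y \<in> C - copy t j" "fst x = fst y"
    then show "x = y" using St_dist C by blast
  qed
  show ?thesis using Cs c1 c2 jr(1) t unfolding j_def by linarith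
qed

lemma St_cap:
  assumes t: "t \<ge> 2" and C: "C \<subseteq> St t" "cap C" and r: "r \<in> C" "\<forall>p\<in>C. fst p \<le> fst r"
  shows "card C \<le> cidx t r + 1"
proof -
  define j where "j = cidx t r"
  have jr: "j \<le> t - 2" "r \<in> copy t j" using cidx[of r t] C r unfolding j_def by auto
  have fC: "finite C" using C St_finite finite_subset by blast
  have ne: "fst ` C \<noteq> {}" using r by auto
  obtain l where l: "l \<in> C" "fst l = Min (fst ` C)" using Min_in[OF finite_imageI[OF fC] ne] by auto
  have lmin: "\<forall>p\<in>C. fst l \<le> fst p" using l fC by simp
  define i where "i = cidx t l"
  have il: "i \<le> t - 2" "l \<in> copy t i" using cidx[of l t] C l unfolding i_def by auto
  have Cs: "card C \<le> card (C \<inter> copy t i) + card (C - copy t i)"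
  proof -
    have "C = (C \<inter> copy t i) \<union> (C - copy t i)" by blast
    then show ?thesis by (metis card_Un_le)
  qed
  have c1: "card (C \<inter> copy t i) \<le> i + 1"
    using copy_card_bounds[OF il(1), of "C \<inter> copy t i"] t cap_subset[OF C(2), of "C \<inter> copy t i"] by auto
  have img: "cidx t p \<in> {i<..j}" if p: "p \<in> C - copy t i" for p
  proof -
    have pS: "p \<in> St t" using p C by auto
    have cp: "cidx t p \<le> t - 2" "p \<in> copy t (cidx t p)" using cidx[OF pS] by auto
    have "p \<noteq> l" using p il by auto
    then have lp: "fst l < fst p" using lmin p St_dist[of l t p] C l by force
    have "i \<le> cidx t p" using idx_order[OF il(1) cp(1) il(2) cp(2) lp] .
    moreover have "i \<noteq> cidx t p" using cp p by auto
    moreover have "cidx t p \<le> j"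
    proof (cases "fst p = fst r")
      case True
      then have "p = r" using St_dist[of p t r] pS C r by auto
      then show ?thesis unfolding j_def by simp
    next
      case False
      then have "fst p < fst r" using r p by force
      then show ?thesis using idx_order[OF cp(1) jr(1) cp(2) jr(2)] by simp
    qed
    ultimately show ?thesis by simp
  qed
  have inj: "inj_on (cidx t) (C - copy t i)"
  proof (rule inj_onI)
    fix x y assume x: "x \<in> C - copy t i" and y: "y \<in> C - copy t i" and e: "cidx t x = cidx t y"
    show "x = y"
    proof (rule ccontr)
      assume ne: "x \<noteq> y"
      have xS: "x \<in> St t" and yS: "y \<in> St t" using x y C by auto
      have "fst x \<noteq> fst y" using ne St_dist xS yS by blast
      then have "\<exists>a b. {a, b} = {x, y} \<and> fst a < fst b" by (metis insert_commute linorder_neqE)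
      then obtain a b where ab: "{a, b} = {x, y}" "fst a < fst b" by blast
      have a: "a \<in> C - copy t i" "b \<in> C - copy t i" using ab x y by auto
      have eab: "cidx t a = cidx t b" using ab e by (metis doubleton_eq_iff)
      have aS: "a \<in> St t" and bS: "b \<in> St t" using a C by auto
      define m where "m = cidx t a"
      have ca: "m \<le> t - 2" "a \<in> copy t m" using cidx[OF aS] m_def by auto
      have cb: "b \<in> copy t m" using cidx[OF bS] eab m_def by auto
      have im: "i < m" using img[OF a(1)] m_def by simp
      have la: "fst l < fst a" using sepx(2)[OF im ca(1) il(2) ca(2)] .
      have "1 * (snd a - snd l) - 1 * (fst a - fst l) < 0" using G1b[OF im ca(1) il(2) ca(2)] .
      moreover have "1 * (snd b - snd a) - 1 * (fst b - fst a) > 0" using G1a[OF ca(1) ca(2) cb ab(2)] .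
      ultimately have "cross3 l a b > 0" using cross3_pos[of 1 l a b 1] la ab(2) by simp
      moreover have "cross3 l a b < 0" using C(2) l(1) a la ab(2) unfolding cap_def by blast
      ultimately show False by simp
    qed
  qed
  have c2: "card (C - copy t i) \<le> j - i"
  proof -
    have "card (C - copy t i) \<le> card {i<..j}"
      using card_inj_on_le[OF inj] img by (meson finite_greaterThanAtMost image_subsetI)
    then show ?thesis by simp
  qed
  have "i \<le> j"
  proof (cases "fst l = fst r")
    case True
    then have "l = r" using St_dist[of l t r] C l r by auto
    then show ?thesis unfolding i_def j_def by simp
  next
    case False
    then have "fst l < fst r" using lmin r by force
    then show ?thesis using idx_order[OF il(1) jr(1) il(2) jr(2)] by simp
  qed
  then show ?thesis using Cs c1 c2 unfolding j_def by linarith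
qed



definition crossR :: "real \<times> real \<Rightarrow> real \<times> real \<Rightarrow> real \<times> real \<Rightarrow> real" where
  "crossR a b c = (fst b - fst a) * (snd c - snd b) - (snd b - snd a) * (fst c - fst b)"

lemma seg_pt:
  fixes a c b :: "real \<times> real"
  assumes S: "convex S" "a \<in> S" "c \<in> S" and x: "fst a \<le> fst b" "fst b \<le> fst c" "fst a < fst c"
  shows "\<exists>P\<in>S. fst P = fst b \<and> (snd b - snd P) * (fst c - fst a) = crossR a c b"
proof -
  define s where "s = (fst b - fst a) / (fst c - fst a)"
  have s: "0 \<le> s" "s \<le> 1" using x unfolding s_def by (auto simp: divide_simps)
  define P where "P = (1 - s) *\<^sub>R a + s *\<^sub>R c"
  have PS: "P \<in> S" unfolding P_def using convexD[OF S(1,2,3), of "1 - s" s] s by simp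
  have sx: "s * (fst c - fst a) = fst b - fst a" using x unfolding s_def by simp
  have fP: "fst P = fst a + s * (fst c - fst a)" "snd P = snd a + s * (snd c - snd a)"
    unfolding P_def by (simp_all add: algebra_simps)
  have "fst P = fst b" using fP sx by simp
  moreover have "(snd b - snd P) * (fst c - fst a) = crossR a c b"
  proof -
    have "(snd b - snd P) * (fst c - fst a) = (snd b - snd a) * (fst c - fst a) - (snd c - snd a) * (s * (fst c - fst a))"
      unfolding fP by (simp add: algebra_simps)
    also have "\<dots> = (snd b - snd a) * (fst c - fst a) - (snd c - snd a) * (fst b - fst a)" using sx by simp
    also have "\<dots> = crossR a c b" unfolding crossR_def by (simp add: algebra_simps)
    finally show ?thesis .
  qed
  ultimately show ?thesis using PS by blast
qed

lemma vert:
  fixes b P1 P2 :: "real \<times> real"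
  assumes S: "convex S" "P1 \<in> S" "P2 \<in> S" and f: "fst P1 = fst b" "fst P2 = fst b"
    and y: "snd P1 \<le> snd b" "snd b \<le> snd P2"
  shows "b \<in> S"
proof (cases "snd P1 = snd P2")
  case True
  then have "b = P1" using f y by (auto simp: prod_eq_iff)
  then show ?thesis using S by simp
next
  case False
  then have d: "snd P2 - snd P1 > 0" using y by simp
  define u where "u = (snd b - snd P1) / (snd P2 - snd P1)"
  have u: "0 \<le> u" "u \<le> 1" using y d unfolding u_def by (auto simp: divide_simps)
  have "b = (1 - u) *\<^sub>R P1 + u *\<^sub>R P2"
  proof (rule prod_eqI)
    show "fst b = fst ((1 - u) *\<^sub>R P1 + u *\<^sub>R P2)" using f by (simp add: algebra_simps)
    have "u * (snd P2 - snd P1) = snd b - snd P1" unfolding u_def using d by simp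
    then show "snd b = snd ((1 - u) *\<^sub>R P1 + u *\<^sub>R P2)" by (simp add: algebra_simps)
  qed
  then show ?thesis using convexD[OF S(1,2,3), of "1 - u" u] u by simp
qed

lemma in_hull4:
  fixes a b c l r :: "real \<times> real"
  assumes x: "fst a < fst b" "fst b < fst c" "fst l \<le> fst b" "fst b \<le> fst r" "fst l < fst r"
    and cr: "(crossR a c b \<ge> 0 \<and> crossR l r b \<le> 0) \<or> (crossR a c b \<le> 0 \<and> crossR l r b \<ge> 0)"
  shows "b \<in> convex hull {a, c, l, r}"
proof -
  let ?S = "convex hull {a, c, l, r}"
  have cv: "convex ?S" by (rule convex_convex_hull)
  have mem: "a \<in> ?S" "c \<in> ?S" "l \<in> ?S" "r \<in> ?S" by (auto intro: hull_inc)
  obtain P1 where P1: "P1 \<in> ?S" "fst P1 = fst b" "(snd b - snd P1) * (fst c - fst a) = crossR a c b"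
    using seg_pt[OF cv mem(1,2), of b] x by auto
  obtain P2 where P2: "P2 \<in> ?S" "fst P2 = fst b" "(snd b - snd P2) * (fst r - fst l) = crossR l r b"
    using seg_pt[OF cv mem(3,4), of b] x by auto
  have ca: "fst c - fst a > 0" "fst r - fst l > 0" using x by auto
  from cr show ?thesis
  proof
    assume h: "crossR a c b \<ge> 0 \<and> crossR l r b \<le> 0"
    have "snd P1 \<le> snd b" using h P1(3) ca(1) by (metis diff_ge_0_iff_ge zero_le_mult_iff not_less)
    moreover have "snd b \<le> snd P2" using h P2(3) ca(2) by (metis diff_le_0_iff_le mult_le_0_iff not_less)
    ultimately show ?thesis using vert[OF cv P1(1) P2(1) P1(2) P2(2)] by simp
  next
    assume h: "crossR a c b \<le> 0 \<and> crossR l r b \<ge> 0"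
    have "snd b \<le> snd P1" using h P1(3) ca(1) by (metis diff_le_0_iff_le mult_le_0_iff not_less)
    moreover have "snd P2 \<le> snd b" using h P2(3) ca(2) by (metis diff_ge_0_iff_ge zero_le_mult_iff not_less)
    ultimately show ?thesis using vert[OF cv P2(1) P1(1) P2(2) P1(2)] by simp
  qed
qed

lemma crossR_to_real: "crossR (to_real a) (to_real b) (to_real c) = real_of_int (cross3 a b c)"
  unfolding crossR_def cross3_def to_real_def by simp

lemma cross3_swap: "cross3 a c b = - cross3 a b c"
  unfolding cross3_def by (simp add: algebra_simps)

lemma cross3_deg: "cross3 a b a = 0" "cross3 a b b = 0"
  unfolding cross3_def by (simp_all add: algebra_simps)

lemma to_real_inj: "to_real a = to_real b \<Longrightarrow> a = b"
  unfolding to_real_def by (auto simp: prod_eq_iff)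

lemma fst_to_real: "fst (to_real a) = real_of_int (fst a)"
  unfolding to_real_def by simp

lemma hull_contra:
  assumes cp: "convex_position (to_real ` P)" and abc: "a \<in> P" "b \<in> P" "c \<in> P" "l \<in> P" "r \<in> P"
    and x: "fst a < fst b" "fst b < fst c" "fst l \<le> fst a" "fst c \<le> fst r"
    and cr: "(cross3 a b c \<le> 0 \<and> cross3 l r b \<le> 0) \<or> (cross3 a b c \<ge> 0 \<and> cross3 l r b \<ge> 0)"
  shows False
proof -
  have "to_real b \<in> convex hull {to_real a, to_real c, to_real l, to_real r}"
  proof (rule in_hull4)
    show "fst (to_real a) < fst (to_real b)" "fst (to_real b) < fst (to_real c)"
      "fst (to_real l) \<le> fst (to_real b)" "fst (to_real b) \<le> fst (to_real r)" "fst (to_real l) < fst (to_real r)"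
      using x by (auto simp: fst_to_real)
    show "(crossR (to_real a) (to_real c) (to_real b) \<ge> 0 \<and> crossR (to_real l) (to_real r) (to_real b) \<le> 0) \<or>
      (crossR (to_real a) (to_real c) (to_real b) \<le> 0 \<and> crossR (to_real l) (to_real r) (to_real b) \<ge> 0)"
      using cr unfolding crossR_to_real cross3_swap[of a c b] by auto
  qed
  moreover have "{to_real a, to_real c, to_real l, to_real r} \<subseteq> to_real ` P - {to_real b}"
  proof -
    have "a \<noteq> b" "c \<noteq> b" "l \<noteq> b" "r \<noteq> b" using x by auto
    then show ?thesis using abc to_real_inj by blast
  qed
  ultimately have "to_real b \<in> convex hull (to_real ` P - {to_real b})" using hull_mono by blast
  moreover have "to_real b \<in> to_real ` P" using abc by simp
  ultimately show False using cp unfolding convex_position_def by blast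
qed

theorem theorem3:
  fixes t :: nat and P :: "(int \<times> int) set"
  assumes "t \<ge> 2" and "P \<subseteq> St t" and "convex_position (to_real ` P)"
  shows "card P \<le> t - 1"
proof (cases "card P \<le> 1")
  case True
  then show ?thesis using assms(1) by linarith
next
  case False
  have fP: "finite P" using assms(2) St_finite finite_subset by blast
  have ne: "fst ` P \<noteq> {}" using False by auto
  obtain l where l: "l \<in> P" "fst l = Min (fst ` P)" using Min_in[OF finite_imageI[OF fP] ne] by auto
  obtain r where r: "r \<in> P" "fst r = Max (fst ` P)" using Max_in[OF finite_imageI[OF fP] ne] by auto
  have lmin: "\<forall>p\<in>P. fst l \<le> fst p" using l fP by simp
  have rmax: "\<forall>p\<in>P. fst p \<le> fst r" using r fP by simp
  have lr: "fst l < fst r"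
  proof (rule ccontr)
    assume "\<not> fst l < fst r"
    then have "\<forall>p\<in>P. fst p = fst l" using lmin rmax by force
    then have "\<forall>p\<in>P. p = l" using St_dist assms(2) l(1) by blast
    then have "card P \<le> 1" using card_le1[OF fP] by metis
    then show False using False by simp
  qed
  define U where "U = {p\<in>P. cross3 l r p \<ge> 0}"
  define L where "L = {p\<in>P. cross3 l r p \<le> 0}"
  have UL: "U \<union> L = P" unfolding U_def L_def by auto
  have lrUL: "{l, r} \<subseteq> U \<inter> L" using l r cross3_deg[of l r] unfolding U_def L_def by auto
  have fU: "finite U" "finite L" using fP unfolding U_def L_def by auto
  have "card (U \<union> L) + card (U \<inter> L) = card U + card L" using card_Un_Int[OF fU] by simp
  moreover have "card (U \<inter> L) \<ge> 2"
  proof -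
    have "l \<noteq> r" using lr by auto
    then have "card {l, r} = 2" by simp
    then show ?thesis using card_mono[OF _ lrUL] fU by (metis finite_Int)
  qed
  ultimately have cP: "card P + 2 \<le> card U + card L" unfolding UL by linarith
  have cupL: "cup L" unfolding cup_def
  proof (intro ballI impI)
    fix a b c assume abc: "a \<in> L" "b \<in> L" "c \<in> L" "fst a < fst b" "fst b < fst c"
    show "cross3 a b c > 0"
    proof (rule ccontr)
      assume "\<not> cross3 a b c > 0"
      moreover have "cross3 l r b \<le> 0" using abc unfolding L_def by auto
      ultimately show False
        using hull_contra[OF assms(3), of a b c l r] abc l r lmin rmax unfolding L_def by force
    qed
  qed
  have capU: "cap U" unfolding cap_def
  proof (intro ballI impI)
    fix a b c assume abc: "a \<in> U" "b \<in> U" "c \<in> U" "fst a < fst b" "fst b < fst c"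
    show "cross3 a b c < 0"
    proof (rule ccontr)
      assume "\<not> cross3 a b c < 0"
      moreover have "cross3 l r b \<ge> 0" using abc unfolding U_def by auto
      ultimately show False
        using hull_contra[OF assms(3), of a b c l r] abc l r lmin rmax unfolding U_def by force
    qed
  qed
  have LS: "L \<subseteq> St t" and US: "U \<subseteq> St t" using assms(2) unfolding L_def U_def by auto
  have rL: "r \<in> L" "r \<in> U" using lrUL by auto
  have c1: "card L \<le> t - cidx t r" using St_cup[OF assms(1) LS cupL rL(1)] rmax unfolding L_def by auto
  have c2: "card U \<le> cidx t r + 1" using St_cap[OF assms(1) US capU rL(2)] rmax unfolding U_def by auto
  have "cidx t r \<le> t - 2" using cidx[of r t] r assms(2) by auto
  then show ?thesis using cP c1 c2 by linarith
qed


end
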